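(* Let $(\mathfrak{X},\pi)$, $a$, $s$, $S$ be as in the context, let $\eta\in(0,\min\{1,\|a\|^{-1}\})$ and $\mathbb{H}_\eta:=\{z\in\mathbb{H}:\operatorname{Im}z\ge\eta,\ |z|\le\eta^{-1}\}$. Let $\mathfrak{B}_\eta$ be the set of functions $\mathfrak{u}:\mathbb{H}_\eta\to\mathcal{B}(\mathfrak{X},\mathbb{H})$ with $\inf_{z\in\mathbb{H}_\eta}\inf_x\operatorname{Im}\mathfrak{u}_x(z)\ge\eta^3/(2+\|S\|)^2$ and $\sup_{z\in\mathbb{H}_\eta}\|\mathfrak{u}(z)\|\le1/\eta$, and define $\Phi(\mathfrak{u})(z):=-1/(z+a+S\mathfrak{u}(z))$. Then $\Phi$ maps $\mathfrak{B}_\eta$ to itself and for all $\mathfrak{u},\mathfrak{w}\in\mathfrak{B}_\eta$ \[ \sup_{z\in\mathbb{H}_\eta}\sup_{x\in\mathfrak{X}}D\big(\Phi(\mathfrak{u})_x(z),\Phi(\mathfrak{w})_x(z)\big)\le\Big(1+\frac{\eta^2}{\|S\|}\Big)^{-2}\sup_{z\in\mathbb{H}_\eta}\sup_{x\in\mathfrak{X}}D\big(\mathfrak{u}_x(z),\mathfrak{w}_x(z)\big), \] where $D(\zeta,\omega):=\frac{|\zeta-\omega|^2}{(\operatorname{Im}\zeta)(\operatorname{Im}\omega)}$ for $\zeta,\omega\in\mathbb{H}$. In particular, the fixed point equation $\mathfrak{u}=\Phi(\mathfrak{u})$ has a unique solution $\mathfrak{u}\in\mathfrak{B}_\eta$.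
   Context: Let $(\mathfrak{X},\pi)$ be a measure space where $\pi$ is a probability measure; $\mathcal{B}(\mathfrak{X},\mathbb{D})$ denotes bounded measurable $\mathbb{D}$-valued functions with sup norm $\|w\|=\sup_x|w_x|$, and $\|S\|$ the induced operator norm. Let $a\in\mathcal{B}(\mathfrak{X},\mathbb{R})$, $s\in\mathcal{B}(\mathfrak{X}^2,[0,\infty))$ symmetric, $(Sw)_x=\int s_{xy}w_y\,\pi(\mathrm{d}y)$. $\mathbb{H}$ is the open complex upper half-plane. Operations on functions ($1/\cdot$, addition of $z$) are pointwise in $x$. (If $\|S\|=0$ the factor $(1+\eta^2/\|S\|)^{-2}$ is read as $0$.) *)

theory Defs
  imports "HOL-Probability.Probability"
begin

definition supnorm :: "'a measure \<Rightarrow> ('a \<Rightarrow> 'b::real_normed_vector) \<Rightarrow> real" where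
  "supnorm M w = (SUP x\<in>space M. norm (w x))"

definition bmeas :: "'a measure \<Rightarrow> 'b::{real_normed_vector, second_countable_topology} set
                     \<Rightarrow> ('a \<Rightarrow> 'b) set" where
  "bmeas M D = {w. w \<in> borel_measurable M \<and> bounded (w ` space M) \<and> (\<forall>x\<in>space M. w x \<in> D)}"

definition upper_half :: "complex set" where
  "upper_half = {z. Im z > 0}"

definition intop :: "'a measure \<Rightarrow> ('a \<Rightarrow> 'a \<Rightarrow> real) \<Rightarrow> ('a \<Rightarrow> complex) \<Rightarrow> 'a \<Rightarrow> complex" where
  "intop M s w = (\<lambda>x. LINT y|M. complex_of_real (s x y) * w y)"

definition opnorm :: "'a measure \<Rightarrow> ('a \<Rightarrow> 'a \<Rightarrow> real) \<Rightarrow> real" where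
  "opnorm M s = (SUP w \<in> {w \<in> bmeas M UNIV. supnorm M w \<le> 1}. supnorm M (intop M s w))"

definition Heta :: "real \<Rightarrow> complex set" where
  "Heta \<eta> = {z \<in> upper_half. Im z \<ge> \<eta> \<and> cmod z \<le> 1 / \<eta>}"

text \<open>The set B_eta of functions u : H_eta -> B(X, H) (represented by total functions;
  only their values on H_eta matter).\<close>
definition Beta :: "'a measure \<Rightarrow> ('a \<Rightarrow> 'a \<Rightarrow> real) \<Rightarrow> real \<Rightarrow> (complex \<Rightarrow> 'a \<Rightarrow> complex) set" where
  "Beta M s \<eta> = {u. (\<forall>z\<in>Heta \<eta>. u z \<in> bmeas M upper_half)
      \<and> (\<forall>z\<in>Heta \<eta>. \<forall>x\<in>space M. Im (u z x) \<ge> \<eta>^3 / (2 + opnorm M s)^2)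
      \<and> (\<forall>z\<in>Heta \<eta>. supnorm M (u z) \<le> 1 / \<eta>)}"

definition Phi :: "'a measure \<Rightarrow> ('a \<Rightarrow> real) \<Rightarrow> ('a \<Rightarrow> 'a \<Rightarrow> real)
                   \<Rightarrow> (complex \<Rightarrow> 'a \<Rightarrow> complex) \<Rightarrow> complex \<Rightarrow> 'a \<Rightarrow> complex" where
  "Phi M a s u = (\<lambda>z x. - 1 / (z + complex_of_real (a x) + intop M s (u z) x))"

definition Dist :: "complex \<Rightarrow> complex \<Rightarrow> real" where
  "Dist \<zeta> \<omega> = (cmod (\<zeta> - \<omega>))^2 / (Im \<zeta> * Im \<omega>)"

definition contr_factor :: "real \<Rightarrow> real \<Rightarrow> real" where
  "contr_factor Sn \<eta> = (if Sn = 0 then 0 else 1 / (1 + \<eta>^2 / Sn)^2)"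

end

theory Submission
  imports Defs
begin

lemma bounded_norm_le_supnorm:
  assumes "bounded (w ` space M)" "x \<in> space M"
  shows "norm (w x) \<le> supnorm M w"
proof -
  from assms(1) obtain B where "\<forall>y\<in>w ` space M. norm y \<le> B" by (auto simp: bounded_iff)
  hence "bdd_above ((\<lambda>x. norm (w x)) ` space M)" by (auto intro!: bdd_aboveI2)
  thus ?thesis unfolding supnorm_def using assms(2) by (rule cSUP_upper2) simp
qed

lemma Dist_minus_inv_aux:
  fixes z w :: complex
  assumes "0 < Im z" "0 < Im w"
  shows "(cmod (- 1 / z - - 1 / w))^2 / (Im (- 1 / z) * Im (- 1 / w)) = (cmod (z - w))^2 / (Im z * Im w)"
proof -
  have z0: "z \<noteq> 0" and w0: "w \<noteq> 0" using assms by auto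
  have nz: "cmod z > 0" "cmod w > 0" using z0 w0 by auto
  have "- 1 / z - - 1 / w = (z - w) / (z * w)" using z0 w0 by (simp add: field_simps)
  hence 1: "(cmod (- 1 / z - - 1 / w))^2 = (cmod (z - w))^2 / ((cmod z)^2 * (cmod w)^2)"
    by (simp add: norm_divide norm_mult power_divide power_mult_distrib)
  have 2: "Im (- 1 / z) = Im z / (cmod z)^2" "Im (- 1 / w) = Im w / (cmod w)^2"
    by (simp_all add: Im_divide cmod_power2)
  show ?thesis unfolding 1 2 using nz assms by (simp add: field_simps)
qed

lemma t_trick:
  fixes X P Q :: real
  assumes "0 \<le> X" "0 \<le> P" "0 \<le> Q" "\<And>t. 0 < t \<Longrightarrow> X \<le> (t * P + Q / t) / 2"
  shows "X^2 \<le> P * Q"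
proof (cases "P = 0 \<or> Q = 0")
  case True
  have "X \<le> 0"
  proof (rule ccontr)
    assume "\<not> X \<le> 0" hence X0: "0 < X" by simp
    show False
    proof (cases "P = 0")
      case True
      have "X \<le> (Q / ((Q + 1) / X)) / 2" using assms(4)[of "(Q+1)/X"] X0 assms(3) True by simp
      also have "\<dots> = Q * X / (2 * (Q + 1))" using X0 assms(3) by (simp add: field_simps)
      also have "\<dots> < X" using X0 assms(3) by (simp add: field_simps) (smt (verit) mult_nonneg_nonneg)
      finally show False by simp
    next
      case False
      hence Q0: "Q = 0" using True by simp
      have "X \<le> (X / (P + 1) * P) / 2" using assms(4)[of "X/(P+1)"] X0 assms(2) Q0 by simp
      also have "\<dots> < X" using X0 assms(2) by (simp add: field_simps) (smt (verit) mult_nonneg_nonneg)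
      finally show False by simp
    qed
  qed
  thus ?thesis using assms True by simp
next
  case False
  hence P0: "0 < P" and Q0: "0 < Q" using assms by auto
  define t where "t = sqrt (Q / P)"
  have t0: "0 < t" unfolding t_def using P0 Q0 by simp
  have "t * P = sqrt (P * Q)" unfolding t_def using P0 Q0
    by (simp add: real_sqrt_divide real_sqrt_mult field_simps)
  moreover have "Q / t = sqrt (P * Q)" unfolding t_def using P0 Q0
    by (simp add: real_sqrt_divide real_sqrt_mult field_simps)
  ultimately have "X \<le> sqrt (P * Q)" using assms(4)[OF t0] by simp
  hence "X^2 \<le> (sqrt (P * Q))^2" using assms(1) by (intro power_mono) auto
  thus ?thesis using P0 Q0 by simp
qed

lemma point_trick:
  fixes d K a b t :: real
  assumes "0 \<le> K" "0 < a" "0 < b" "0 \<le> d" "d^2 \<le> K * a * b" "0 < t"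
  shows "d \<le> (t * K * a + b / t) / 2"
proof -
  have "0 \<le> (t * K * a - b / t)^2" by simp
  hence "4 * (K * a * b) \<le> (t * K * a + b / t)^2" using assms(6)
    by (simp add: power2_eq_square field_simps)
  hence "(2 * d)^2 \<le> (t * K * a + b / t)^2" using assms(5) by (simp add: power2_eq_square)
  moreover have "0 \<le> t * K * a + b / t"
    using assms by (intro add_nonneg_nonneg mult_nonneg_nonneg divide_nonneg_pos) simp_all
  ultimately have "2 * d \<le> t * K * a + b / t"
    by (rule power2_le_imp_le)
  thus ?thesis by simp
qed

lemma factor_bound:
  fixes A B Iz N \<eta> :: real
  assumes "0 < \<eta>" "0 \<le> N" "\<eta> \<le> Iz" "0 \<le> A" "A \<le> N / \<eta>" "0 \<le> B" "B \<le> N / \<eta>"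
  shows "A * B / ((Iz + A) * (Iz + B)) \<le> (if N = 0 then 0 else 1 / (1 + \<eta>^2 / N)^2)"
proof (cases "N = 0")
  case True
  hence "A = 0" using assms by simp
  thus ?thesis by simp
next
  case False
  hence N0: "0 < N" using assms by simp
  have r: "1 / (1 + \<eta>^2 / N) = N / (\<eta>^2 + N)" using N0 by (simp add: field_simps)
  have key: "X / (Iz + X) \<le> N / (\<eta>^2 + N)" if "0 \<le> X" "X \<le> N / \<eta>" for X
  proof -
    have "X * \<eta> \<le> N" using that assms(1) by (simp add: field_simps)
    hence "X * \<eta>^2 \<le> N * \<eta>" using assms(1) by (simp add: power2_eq_square mult.assoc[symmetric] mult_right_mono)
    also have "\<dots> \<le> N * Iz" using assms N0 by simp
    finally have "X * (\<eta>^2 + N) \<le> N * (Iz + X)" by (simp add: algebra_simps)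
    moreover have "0 < Iz + X" "0 < \<eta>^2 + N" using that assms N0 by (auto intro: add_nonneg_pos)
    ultimately show ?thesis by (simp add: divide_simps)
  qed
  have "A * B / ((Iz + A) * (Iz + B)) = (A / (Iz + A)) * (B / (Iz + B))" by simp
  also have "\<dots> \<le> (N / (\<eta>^2 + N)) * (N / (\<eta>^2 + N))"
    using key[of A] key[of B] assms by (intro mult_mono) auto
  also have "\<dots> = (if N = 0 then 0 else 1 / (1 + \<eta>^2 / N)^2)"
    unfolding if_not_P[OF False] power_one_over[symmetric] r by (simp only: power2_eq_square)
  finally show ?thesis .
qed


lemma SUP2_upper:
  fixes f :: "'z \<Rightarrow> 'x \<Rightarrow> real"
  assumes "\<And>z x. z \<in> Z \<Longrightarrow> x \<in> X \<Longrightarrow> f z x \<le> B" "X \<noteq> {}" "z \<in> Z" "x \<in> X"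
  shows "f z x \<le> (SUP z\<in>Z. SUP x\<in>X. f z x)"
proof -
  have inner: "(SUP x\<in>X. f z' x) \<le> B" if "z' \<in> Z" for z'
    by (rule cSUP_least) (use assms that in auto)
  have "f z x \<le> (SUP x\<in>X. f z x)"
    by (rule cSUP_upper) (use assms in \<open>auto intro!: bdd_aboveI2\<close>)
  also have "\<dots> \<le> (SUP z\<in>Z. SUP x\<in>X. f z x)"
    by (rule cSUP_upper) (use assms inner in \<open>auto intro!: bdd_aboveI2\<close>)
  finally show ?thesis .
qed

lemma SUP2_least:
  fixes f :: "'z \<Rightarrow> 'x \<Rightarrow> real"
  assumes "Z \<noteq> {}" "X \<noteq> {}" "\<And>z x. z \<in> Z \<Longrightarrow> x \<in> X \<Longrightarrow> f z x \<le> C"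
  shows "(SUP z\<in>Z. SUP x\<in>X. f z x) \<le> C"
  by (rule cSUP_least, fact, rule cSUP_least) (use assms in auto)

lemma geometric_convergent:
  fixes f :: "nat \<Rightarrow> complex"
  assumes "\<And>n. norm (f n - f (Suc n)) \<le> C * r ^ n" "0 \<le> r" "r < 1"
  shows "convergent f"
proof -
  define g where "g n = f (Suc n) - f n" for n
  have "summable (\<lambda>n. C * r ^ n)" using assms by (intro summable_mult summable_geometric) simp
  hence sg: "summable g"
    by (rule summable_comparison_test'[where N=0]) (use assms(1) in \<open>simp add: g_def norm_minus_commute\<close>)
  have eq: "f n = f 0 + (\<Sum>i<n. g i)" for n
    unfolding g_def by (simp add: sum_lessThan_telescope)
  have "f = (\<lambda>n. f 0 + (\<Sum>i<n. g i))" by (rule ext) (rule eq)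
  moreover have "(\<lambda>n. f 0 + (\<Sum>i<n. g i)) \<longlonglongrightarrow> f 0 + suminf g"
    by (intro tendsto_intros summable_LIMSEQ sg)
  ultimately show ?thesis unfolding convergent_def by auto
qed

locale setting = prob_space M for M :: "'a measure" +
  fixes a :: "'a \<Rightarrow> real" and s :: "'a \<Rightarrow> 'a \<Rightarrow> real" and \<eta> :: real
  assumes a_b: "a \<in> bmeas M UNIV"
    and s_b: "(\<lambda>(x, y). s x y) \<in> bmeas (M \<Otimes>\<^sub>M M) {0..}"
    and eta0: "0 < \<eta>" and eta1: "\<eta> < 1" and eta_a: "\<eta> * supnorm M a < 1"
begin

lemma s_meas: "(\<lambda>(x, y). s x y) \<in> borel_measurable (M \<Otimes>\<^sub>M M)"
  using s_b by (simp add: bmeas_def)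

lemma s_nonneg: "x \<in> space M \<Longrightarrow> y \<in> space M \<Longrightarrow> 0 \<le> s x y"
  using s_b by (auto simp: bmeas_def space_pair_measure)

lemma s_bound: obtains Bs where "0 \<le> Bs" "\<And>x y. x \<in> space M \<Longrightarrow> y \<in> space M \<Longrightarrow> s x y \<le> Bs"
proof -
  from s_b have "bounded ((\<lambda>(x, y). s x y) ` (space M \<times> space M))"
    by (simp add: bmeas_def space_pair_measure)
  then obtain B where B: "\<forall>p\<in>space M \<times> space M. norm ((\<lambda>(x, y). s x y) p) \<le> B"
    by (auto simp: bounded_iff)
  show ?thesis
  proof (rule that[of "max B 0"])
    fix x y assume "x \<in> space M" "y \<in> space M"
    with B have "norm (s x y) \<le> B" by fastforce
    thus "s x y \<le> max B 0" by auto
  qed simp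
qed

definition Bs where "Bs = (SOME B. 0 \<le> B \<and> (\<forall>x\<in>space M. \<forall>y\<in>space M. s x y \<le> B))"

lemma Bs: "0 \<le> Bs" "x \<in> space M \<Longrightarrow> y \<in> space M \<Longrightarrow> s x y \<le> Bs"
proof -
  have "\<exists>B. 0 \<le> B \<and> (\<forall>x\<in>space M. \<forall>y\<in>space M. s x y \<le> B)"
    using s_bound by metis
  from someI_ex[OF this] show "0 \<le> Bs" "x \<in> space M \<Longrightarrow> y \<in> space M \<Longrightarrow> s x y \<le> Bs"
    unfolding Bs_def by auto
qed

lemma s_row_meas: "x \<in> space M \<Longrightarrow> (\<lambda>y. s x y) \<in> borel_measurable M"
  using measurable_Pair2[OF s_meas] by simp

lemma bmeas_bound:
  assumes "w \<in> bmeas M D"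
  obtains B where "0 \<le> B" "\<And>x. x \<in> space M \<Longrightarrow> norm (w x) \<le> B"
proof -
  from assms obtain B where B: "\<forall>y\<in>w ` space M. norm y \<le> B" by (auto simp: bmeas_def bounded_iff)
  show ?thesis by (rule that[of "max B 0"]) (use B in auto)
qed

lemma integrable_row:
  fixes w :: "'a \<Rightarrow> complex"
  assumes "w \<in> bmeas M D" "x \<in> space M"
  shows "integrable M (\<lambda>y. complex_of_real (s x y) * w y)"
proof -
  obtain B where B: "0 \<le> B" "\<And>x. x \<in> space M \<Longrightarrow> norm (w x) \<le> B" using bmeas_bound[OF assms(1)] by blast
  have wm: "w \<in> borel_measurable M" using assms(1) by (simp add: bmeas_def)
  show ?thesis
  proof (rule integrable_const_bound[where B="Bs * B"])
    show "AE y in M. norm (complex_of_real (s x y) * w y) \<le> Bs * B"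
    proof (rule AE_I2)
      fix y assume y: "y \<in> space M"
      have "norm (complex_of_real (s x y) * w y) = s x y * norm (w y)"
        using s_nonneg[OF assms(2) y] by (simp add: norm_mult)
      also have "\<dots> \<le> Bs * B" using Bs(2)[OF assms(2) y] B y s_nonneg[OF assms(2) y] Bs(1)
        by (intro mult_mono) auto
      finally show "norm (complex_of_real (s x y) * w y) \<le> Bs * B" .
    qed
    show "(\<lambda>y. complex_of_real (s x y) * w y) \<in> borel_measurable M"
      using s_row_meas[OF assms(2)] wm by measurable
  qed
qed

lemma intop_bound:
  fixes w :: "'a \<Rightarrow> complex"
  assumes "\<And>y. y \<in> space M \<Longrightarrow> norm (w y) \<le> B" "x \<in> space M"
  shows "norm (intop M s w x) \<le> Bs * B"
proof -
  have "norm (intop M s w x) \<le> (LINT y|M. norm (complex_of_real (s x y) * w y))"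
    unfolding intop_def by (rule integral_norm_bound)
  also have "\<dots> \<le> (LINT y|M. Bs * B)"
  proof (rule integral_mono_AE')
    show "integrable M (\<lambda>y. Bs * B)" by simp
    show "AE y in M. norm (complex_of_real (s x y) * w y) \<le> Bs * B"
    proof (rule AE_I2)
      fix y assume y: "y \<in> space M"
      have "norm (complex_of_real (s x y) * w y) = s x y * norm (w y)"
        using s_nonneg[OF assms(2) y] by (simp add: norm_mult)
      also have "\<dots> \<le> Bs * B" using Bs(2)[OF assms(2) y] assms(1)[OF y] s_nonneg[OF assms(2) y] Bs(1)
        by (intro mult_mono) auto
      finally show "norm (complex_of_real (s x y) * w y) \<le> Bs * B" .
    qed
    show "AE y in M. 0 \<le> Bs * B" using assms Bs(1) by (meson norm_ge_zero order_trans zero_le_mult_iff AE_I2)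
  qed
  also have "\<dots> = Bs * B" by (simp add: prob_space)
  finally show ?thesis .
qed

lemma intop_meas:
  fixes w :: "'a \<Rightarrow> complex"
  assumes "w \<in> borel_measurable M"
  shows "intop M s w \<in> borel_measurable M"
proof -
  have "(\<lambda>p. complex_of_real ((\<lambda>(x, y). s x y) p) * w (snd p)) \<in> borel_measurable (M \<Otimes>\<^sub>M M)"
    using s_meas assms by measurable
  hence "case_prod (\<lambda>x y. complex_of_real (s x y) * w y) \<in> borel_measurable (M \<Otimes>\<^sub>M M)"
    by (simp add: case_prod_beta')
  from borel_measurable_lebesgue_integral[OF this] show ?thesis
    unfolding intop_def .
qed

lemma intop_bmeas:
  fixes w :: "'a \<Rightarrow> complex"
  assumes "w \<in> bmeas M D"
  shows "intop M s w \<in> bmeas M UNIV"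
proof -
  obtain B where B: "0 \<le> B" "\<And>x. x \<in> space M \<Longrightarrow> norm (w x) \<le> B" using bmeas_bound[OF assms(1)] by blast
  have "bounded (intop M s w ` space M)"
    unfolding bounded_iff using intop_bound[where w=w and B=B, OF B(2)] by blast
  thus ?thesis using intop_meas assms by (auto simp: bmeas_def)
qed

lemma intop_diff:
  fixes u w :: "'a \<Rightarrow> complex"
  assumes "u \<in> bmeas M D" "w \<in> bmeas M D'" "x \<in> space M"
  shows "intop M s u x - intop M s w x = intop M s (\<lambda>y. u y - w y) x"
  unfolding intop_def
  using Bochner_Integration.integral_diff[OF integrable_row[OF assms(1,3)] integrable_row[OF assms(2,3)]]
  by (simp add: algebra_simps)

lemma Im_intop:
  fixes w :: "'a \<Rightarrow> complex"
  assumes "w \<in> bmeas M D" "x \<in> space M"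
  shows "Im (intop M s w x) = (LINT y|M. s x y * Im (w y))"
  unfolding intop_def using integral_Im[OF integrable_row[OF assms]] by simp

lemma integrable_row_real:
  fixes w :: "'a \<Rightarrow> complex"
  assumes "w \<in> bmeas M D" "x \<in> space M"
  shows "integrable M (\<lambda>y. s x y * Im (w y))"
  using integrable_Im[OF integrable_row[OF assms]] by simp

lemma Im_intop_nonneg:
  fixes w :: "'a \<Rightarrow> complex"
  assumes "w \<in> bmeas M D" "x \<in> space M" "\<And>y. y \<in> space M \<Longrightarrow> 0 \<le> Im (w y)"
  shows "0 \<le> Im (intop M s w x)"
  unfolding Im_intop[OF assms(1,2)]
  by (rule integral_nonneg_AE) (use assms s_nonneg in \<open>auto intro!: AE_I2\<close>)

definition "N = opnorm M s"

lemma opnorm_bdd: "bdd_above ((\<lambda>w. supnorm M (intop M s w)) ` {w \<in> bmeas M UNIV. supnorm M w \<le> 1})"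
proof (rule bdd_aboveI2)
  fix w :: "'a \<Rightarrow> complex" assume w: "w \<in> {w \<in> bmeas M UNIV. supnorm M w \<le> 1}"
  have wb: "\<And>y. y \<in> space M \<Longrightarrow> norm (w y) \<le> 1"
    using w bounded_norm_le_supnorm[of w M] by (force simp: bmeas_def)
  have "(SUP x\<in>space M. norm (intop M s w x)) \<le> Bs * 1"
    by (rule cSUP_least) (use intop_bound[OF wb] not_empty in auto)
  thus "supnorm M (intop M s w) \<le> Bs" by (simp add: supnorm_def)
qed

lemma supnorm_nonneg: "bounded (w ` space M) \<Longrightarrow> 0 \<le> supnorm M w"
proof -
  assume b: "bounded (w ` space M)"
  obtain x where "x \<in> space M" using not_empty by blast
  from bounded_norm_le_supnorm[OF b this] show ?thesis by (meson norm_ge_zero order_trans)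
qed

lemma N_nonneg: "0 \<le> N"
proof -
  have z: "(\<lambda>_. 0::complex) \<in> {w \<in> bmeas M UNIV. supnorm M w \<le> 1}"
    using not_empty by (simp add: bmeas_def supnorm_def image_constant_conv)
  have "supnorm M (intop M s (\<lambda>_. 0::complex)) \<le> N"
    unfolding N_def opnorm_def by (rule cSUP_upper[OF z opnorm_bdd])
  moreover have "0 \<le> supnorm M (intop M s (\<lambda>_. 0::complex))"
    using intop_bmeas[of "\<lambda>_. 0::complex" UNIV] not_empty by (intro supnorm_nonneg) (simp_all add: bmeas_def image_constant_conv)
  ultimately show ?thesis by linarith
qed

lemma opnorm_bound:
  fixes w :: "'a \<Rightarrow> complex"
  assumes w: "w \<in> bmeas M D" and x: "x \<in> space M"
  shows "norm (intop M s w x) \<le> N * supnorm M w"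
proof -
  define m where "m = supnorm M w"
  have wb: "bounded (w ` space M)" and wm: "w \<in> borel_measurable M" using w by (auto simp: bmeas_def)
  have m0: "0 \<le> m" unfolding m_def by (rule supnorm_nonneg[OF wb])
  have wle: "\<And>y. y \<in> space M \<Longrightarrow> norm (w y) \<le> m" unfolding m_def by (rule bounded_norm_le_supnorm[OF wb])
  show ?thesis
  proof (cases "m = 0")
    case True
    hence "intop M s w x = (LINT y|M. 0)" unfolding intop_def
      using wle by (intro Bochner_Integration.integral_cong) auto
    thus ?thesis using N_nonneg m0 True by (simp add: m_def)
  next
    case False
    hence mpos: "0 < m" using m0 by simp
    define w' where "w' = (\<lambda>y. w y / complex_of_real m)"
    have w'b: "w' \<in> bmeas M UNIV"
    proof -
      have "w' \<in> borel_measurable M" unfolding w'_def using wm by measurable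
      moreover have "bounded (w' ` space M)" unfolding bounded_iff w'_def
        using wle mpos by (intro exI[of _ 1]) (auto simp: norm_divide)
      ultimately show ?thesis by (simp add: bmeas_def)
    qed
    have "supnorm M w' \<le> 1" unfolding supnorm_def
      by (rule cSUP_least) (use not_empty wle mpos in \<open>auto simp: w'_def norm_divide\<close>)
    hence w'in: "w' \<in> {w \<in> bmeas M UNIV. supnorm M w \<le> 1}" using w'b by simp
    have "norm (intop M s w' x) \<le> supnorm M (intop M s w')"
      using intop_bmeas[OF w'b] x by (intro bounded_norm_le_supnorm) (auto simp: bmeas_def)
    also have "\<dots> \<le> N"
      unfolding N_def opnorm_def by (rule cSUP_upper[OF w'in opnorm_bdd])
    finally have 1: "norm (intop M s w' x) \<le> N" .
    have "intop M s w' x = intop M s w x / complex_of_real m"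
      proof -
      have "(\<lambda>y. complex_of_real (s x y) * w' y) = (\<lambda>y. complex_of_real (s x y) * w y / complex_of_real m)"
        unfolding w'_def by simp
      thus ?thesis unfolding intop_def by (simp only: integral_divide_zero)
    qed
    hence "norm (intop M s w x) = m * norm (intop M s w' x)"
      using mpos by (simp add: norm_divide)
    also have "\<dots> \<le> m * N" using 1 m0 by (rule mult_left_mono)
    finally show ?thesis by (simp add: m_def mult.commute)
  qed
qed

definition "c = \<eta>^3 / (2 + N)^2"

lemma c_pos: "0 < c" unfolding c_def using eta0 N_nonneg by simp

lemma Heta_D: assumes "z \<in> Heta \<eta>" shows "\<eta> \<le> Im z" "cmod z \<le> 1/\<eta>"
  using assms by (auto simp: Heta_def)

lemma Heta_ne: "\<i> * complex_of_real \<eta> \<in> Heta \<eta>"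
  using eta0 eta1 by (auto simp: Heta_def upper_half_def norm_mult divide_simps power2_eq_square intro: mult_le_one)

lemma Beta_D:
  assumes "u \<in> Beta M s \<eta>" "z \<in> Heta \<eta>"
  shows "u z \<in> bmeas M upper_half" "\<And>x. x \<in> space M \<Longrightarrow> c \<le> Im (u z x)"
    "\<And>x. x \<in> space M \<Longrightarrow> norm (u z x) \<le> 1/\<eta>" "supnorm M (u z) \<le> 1/\<eta>"
proof -
  show ub: "u z \<in> bmeas M upper_half" using assms by (simp add: Beta_def)
  show "\<And>x. x \<in> space M \<Longrightarrow> c \<le> Im (u z x)" using assms by (simp add: Beta_def c_def N_def)
  show sn: "supnorm M (u z) \<le> 1/\<eta>" using assms by (simp add: Beta_def)
  show "\<And>x. x \<in> space M \<Longrightarrow> norm (u z x) \<le> 1/\<eta>"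
    using bounded_norm_le_supnorm[of "u z" M] ub sn by (force simp: bmeas_def)
qed

lemma a_D: "x \<in> space M \<Longrightarrow> \<bar>a x\<bar> \<le> supnorm M a" "supnorm M a < 1/\<eta>" "a \<in> borel_measurable M"
proof -
  show "x \<in> space M \<Longrightarrow> \<bar>a x\<bar> \<le> supnorm M a"
    using bounded_norm_le_supnorm[of a M x] a_b by (auto simp: bmeas_def)
  show "supnorm M a < 1/\<eta>" using eta_a eta0 by (simp add: field_simps)
  show "a \<in> borel_measurable M" using a_b by (simp add: bmeas_def)
qed

definition "zeta u z x = z + complex_of_real (a x) + intop M s (u z) x"

lemma zeta_props:
  assumes "u \<in> Beta M s \<eta>" "z \<in> Heta \<eta>" "x \<in> space M"
  shows "Im (zeta u z x) = Im z + Im (intop M s (u z) x)"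
    "0 \<le> Im (intop M s (u z) x)" "Im (intop M s (u z) x) \<le> N / \<eta>"
    "\<eta> \<le> Im (zeta u z x)" "cmod (zeta u z x) \<le> (2 + N) / \<eta>"
proof -
  note B = Beta_D[OF assms(1,2)]
  show "Im (zeta u z x) = Im z + Im (intop M s (u z) x)" by (simp add: zeta_def)
  show i0: "0 \<le> Im (intop M s (u z) x)"
    by (rule Im_intop_nonneg[OF B(1) assms(3)]) (use B(2) c_pos in force)
  have nb: "norm (intop M s (u z) x) \<le> N / \<eta>"
    using order_trans[OF opnorm_bound[OF B(1) assms(3)] mult_left_mono[OF B(4) N_nonneg]] by simp
  thus "Im (intop M s (u z) x) \<le> N / \<eta>" using abs_Im_le_cmod[of "intop M s (u z) x"] by linarith
  show "\<eta> \<le> Im (zeta u z x)" using i0 Heta_D[OF assms(2)] by (simp add: zeta_def)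
  have "cmod (zeta u z x) \<le> cmod z + \<bar>a x\<bar> + norm (intop M s (u z) x)"
    unfolding zeta_def using norm_triangle_ineq[of "z + complex_of_real (a x)" "intop M s (u z) x"]
      norm_triangle_ineq[of z "complex_of_real (a x)"] by simp
  also have "\<dots> \<le> 1/\<eta> + 1/\<eta> + N/\<eta>" using Heta_D[OF assms(2)] a_D(1)[OF assms(3)] a_D(2) nb by linarith
  also have "\<dots> = (2 + N) / \<eta>" by (simp add: add_divide_distrib)
  finally show "cmod (zeta u z x) \<le> (2 + N) / \<eta>" .
qed

lemma Im_minus_inv: "Im (- 1 / w) = Im w / (cmod w)^2"
  by (simp add: Im_divide cmod_power2)

lemma norm_minus_inv: "cmod (- 1 / w) = 1 / cmod w"
  by (simp add: norm_divide)

lemma Phi_eq: "Phi M a s u z x = - 1 / zeta u z x"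
  by (simp add: Phi_def zeta_def)

lemma Phi_self:
  assumes u: "u \<in> Beta M s \<eta>"
  shows "Phi M a s u \<in> Beta M s \<eta>"
proof -
  have *: "z \<in> Heta \<eta> \<Longrightarrow> x \<in> space M \<Longrightarrow> c \<le> Im (Phi M a s u z x) \<and> norm (Phi M a s u z x) \<le> 1/\<eta>" for z x
  proof -
    assume z: "z \<in> Heta \<eta>" and x: "x \<in> space M"
    note Z = zeta_props[OF u z x]
    have ipos: "\<eta> \<le> Im (zeta u z x)" by (rule Z(4))
    have cpos: "\<eta> \<le> cmod (zeta u z x)" using ipos abs_Im_le_cmod[of "zeta u z x"] by linarith
    have "norm (Phi M a s u z x) = 1 / cmod (zeta u z x)" by (simp add: Phi_eq norm_divide)
    also have "\<dots> \<le> 1 / \<eta>" using cpos eta0 by (intro divide_left_mono) (auto intro!: mult_pos_pos)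
    finally have n: "norm (Phi M a s u z x) \<le> 1/\<eta>" .
    have "c = \<eta> / ((2 + N) / \<eta>)^2" unfolding c_def using eta0 by (simp add: field_simps power2_eq_square power3_eq_cube)
    also have "\<dots> \<le> Im (zeta u z x) / (cmod (zeta u z x))^2"
      using ipos cpos Z(5) eta0 by (intro frac_le power_mono) auto
    also have "\<dots> = Im (Phi M a s u z x)" unfolding Phi_eq by (rule Im_minus_inv[symmetric])
    finally show ?thesis using n by simp
  qed
  have m: "Phi M a s u z \<in> borel_measurable M" if z: "z \<in> Heta \<eta>" for z
  proof -
    have "intop M s (u z) \<in> borel_measurable M"
      using Beta_D(1)[OF u z] by (intro intop_meas) (simp add: bmeas_def)
    thus ?thesis unfolding Phi_def using a_D(3) by measurable
  qed
  show ?thesis unfolding Beta_def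
  proof (intro CollectI conjI ballI)
    fix z assume z: "z \<in> Heta \<eta>"
    show "Phi M a s u z \<in> bmeas M upper_half"
      unfolding bmeas_def upper_half_def using m[OF z] * [OF z] c_pos
      by (auto simp: bounded_iff intro!: exI[of _ "1/\<eta>"]) (smt (verit))
    show "supnorm M (Phi M a s u z) \<le> 1 / \<eta>" unfolding supnorm_def
      by (rule cSUP_least) (use not_empty * [OF z] in auto)
  next
    fix z x assume "z \<in> Heta \<eta>" "x \<in> space M"
    with * show "\<eta> ^ 3 / (2 + opnorm M s)\<^sup>2 \<le> Im (Phi M a s u z x)" by (simp add: c_def N_def)
  qed
qed

lemma Dist_Phi:
  assumes "u \<in> Beta M s \<eta>" "w \<in> Beta M s \<eta>" "z \<in> Heta \<eta>" "x \<in> space M"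
  shows "Dist (Phi M a s u z x) (Phi M a s w z x)
     = (cmod (intop M s (u z) x - intop M s (w z) x))^2 /
       ((Im z + Im (intop M s (u z) x)) * (Im z + Im (intop M s (w z) x)))"
proof -
  note U = zeta_props[OF assms(1,3,4)] and W = zeta_props[OF assms(2,3,4)]
  have "zeta u z x - zeta w z x = intop M s (u z) x - intop M s (w z) x" by (simp add: zeta_def)
  thus ?thesis unfolding Dist_def Phi_eq
    using Dist_minus_inv_aux[of "zeta u z x" "zeta w z x"] U(4) W(4) eta0 U(1) W(1) by simp
qed

lemma contract_point:
  assumes u: "u \<in> Beta M s \<eta>" and w: "w \<in> Beta M s \<eta>" and z: "z \<in> Heta \<eta>" and x: "x \<in> space M"
    and K0: "0 \<le> K" and K: "\<And>y. y \<in> space M \<Longrightarrow> Dist (u z y) (w z y) \<le> K"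
  shows "Dist (Phi M a s u z x) (Phi M a s w z x) \<le> contr_factor N \<eta> * K"
proof -
  note U = zeta_props[OF u z x] and W = zeta_props[OF w z x]
  note BU = Beta_D[OF u z] and BW = Beta_D[OF w z]
  define A where "A = Im (intop M s (u z) x)"
  define B where "B = Im (intop M s (w z) x)"
  define X where "X = cmod (intop M s (u z) x - intop M s (w z) x)"
  have dw: "(\<lambda>y. u z y - w z y) \<in> bmeas M UNIV"
  proof -
    obtain B1 where "\<And>y. y \<in> space M \<Longrightarrow> norm (u z y) \<le> B1" using bmeas_bound[OF BU(1)] by blast
    moreover obtain B2 where "\<And>y. y \<in> space M \<Longrightarrow> norm (w z y) \<le> B2" using bmeas_bound[OF BW(1)] by blast
    ultimately have "bounded ((\<lambda>y. u z y - w z y) ` space M)" unfolding bounded_iff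
      by (intro exI[of _ "B1 + B2"]) (auto intro: order_trans[OF norm_triangle_ineq4] add_mono)
    moreover have "(\<lambda>y. u z y - w z y) \<in> borel_measurable M" using BU(1) BW(1) by (auto simp: bmeas_def)
    ultimately show ?thesis by (simp add: bmeas_def)
  qed
  have Xle: "X \<le> (t * K * A + B / t) / 2" if t: "0 < t" for t
  proof -
    have "X = cmod (intop M s (\<lambda>y. u z y - w z y) x)" unfolding X_def by (simp add: intop_diff[OF BU(1) BW(1) x])
    also have "\<dots> \<le> (LINT y|M. norm (complex_of_real (s x y) * (u z y - w z y)))"
      unfolding intop_def by (rule integral_norm_bound)
    also have "\<dots> \<le> (LINT y|M. (t * K / 2) * (s x y * Im (u z y)) + (1 / (2 * t)) * (s x y * Im (w z y)))"
    proof (rule integral_mono_AE')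
      show "integrable M (\<lambda>y. (t * K / 2) * (s x y * Im (u z y)) + (1 / (2 * t)) * (s x y * Im (w z y)))"
        using integrable_row_real[OF BU(1) x] integrable_row_real[OF BW(1) x] by simp
      show "AE y in M. norm (complex_of_real (s x y) * (u z y - w z y))
         \<le> (t * K / 2) * (s x y * Im (u z y)) + (1 / (2 * t)) * (s x y * Im (w z y))"
      proof (rule AE_I2)
        fix y assume y: "y \<in> space M"
        have iu: "0 < Im (u z y)" and iw: "0 < Im (w z y)" using BU(2)[OF y] BW(2)[OF y] c_pos by linarith+
        have "(cmod (u z y - w z y))^2 \<le> K * Im (u z y) * Im (w z y)"
          using K[OF y] iu iw by (simp add: Dist_def divide_le_eq mult.assoc)
        from point_trick[OF K0 iu iw norm_ge_zero this t]
        have "cmod (u z y - w z y) \<le> (t * K * Im (u z y) + Im (w z y) / t) / 2" .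
        hence "s x y * cmod (u z y - w z y) \<le> s x y * ((t * K * Im (u z y) + Im (w z y) / t) / 2)"
          using s_nonneg[OF x y] by (rule mult_left_mono)
        thus "norm (complex_of_real (s x y) * (u z y - w z y))
         \<le> (t * K / 2) * (s x y * Im (u z y)) + (1 / (2 * t)) * (s x y * Im (w z y))"
        proof -
          have e1: "norm (complex_of_real (s x y) * (u z y - w z y)) = s x y * cmod (u z y - w z y)"
            using s_nonneg[OF x y] by (simp add: norm_mult)
          have e2: "s x y * ((t * K * Im (u z y) + Im (w z y) / t) / 2)
              = (t * K / 2) * (s x y * Im (u z y)) + (1 / (2 * t)) * (s x y * Im (w z y))"
            using t by (simp add: field_simps)
          show ?thesis using e1 e2 \<open>s x y * cmod (u z y - w z y) \<le> _\<close> by linarith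
        qed
      qed
      show "AE y in M. 0 \<le> (t * K / 2) * (s x y * Im (u z y)) + (1 / (2 * t)) * (s x y * Im (w z y))"
      proof (rule AE_I2)
        fix y assume y: "y \<in> space M"
        have iu: "0 < Im (u z y)" and iw: "0 < Im (w z y)" using BU(2)[OF y] BW(2)[OF y] c_pos by linarith+
        show "0 \<le> (t * K / 2) * (s x y * Im (u z y)) + (1 / (2 * t)) * (s x y * Im (w z y))"
          using s_nonneg[OF x y] iu iw t K0 by (intro add_nonneg_nonneg mult_nonneg_nonneg) auto
      qed
    qed
    also have "\<dots> = (t * K / 2) * A + (1 / (2 * t)) * B"
      using integrable_row_real[OF BU(1) x] integrable_row_real[OF BW(1) x]
      by (simp add: A_def B_def Im_intop[OF BU(1) x] Im_intop[OF BW(1) x])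
    also have "\<dots> = (t * K * A + B / t) / 2" by (simp add: field_simps)
    finally show ?thesis .
  qed
  have A0: "0 \<le> A" and B0: "0 \<le> B" using U(2) W(2) by (simp_all add: A_def B_def)
  have X2: "X^2 \<le> (K * A) * B"
    by (rule t_trick) (use Xle A0 B0 K0 in \<open>auto simp: X_def mult.assoc\<close>)
  have Iz: "\<eta> \<le> Im z" using Heta_D[OF z] by simp
  have den: "0 < (Im z + A) * (Im z + B)" using Iz eta0 A0 B0 by (intro mult_pos_pos) linarith+
  have "Dist (Phi M a s u z x) (Phi M a s w z x) = X^2 / ((Im z + A) * (Im z + B))"
    unfolding Dist_Phi[OF u w z x] A_def B_def X_def ..
  also have "\<dots> \<le> (K * A * B) / ((Im z + A) * (Im z + B))"
    using X2 den by (intro divide_right_mono) auto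
  also have "\<dots> = K * (A * B / ((Im z + A) * (Im z + B)))" by simp
  also have "\<dots> \<le> K * contr_factor N \<eta>"
    using factor_bound[OF eta0 N_nonneg Iz A0 _ B0] U(3) W(3) K0 unfolding A_def B_def contr_factor_def
    by (intro mult_left_mono) auto
  finally show ?thesis by (simp add: mult.commute)
qed

lemma Dist_nonneg: "0 < Im p \<Longrightarrow> 0 < Im q \<Longrightarrow> 0 \<le> Dist p q"
  by (simp add: Dist_def)

definition "Kmax = (2 / \<eta>)^2 / c^2"

lemma Dist_bound:
  assumes "u \<in> Beta M s \<eta>" "w \<in> Beta M s \<eta>" "z \<in> Heta \<eta>" "x \<in> space M"
  shows "Dist (u z x) (w z x) \<le> Kmax" "0 \<le> Dist (u z x) (w z x)"
proof -
  note BU = Beta_D[OF assms(1,3)] and BW = Beta_D[OF assms(2,3)]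
  have iu: "c \<le> Im (u z x)" and iw: "c \<le> Im (w z x)" using BU(2)[OF assms(4)] BW(2)[OF assms(4)] .
  have "cmod (u z x - w z x) \<le> 2 / \<eta>"
    using norm_triangle_ineq4[of "u z x" "w z x"] BU(3)[OF assms(4)] BW(3)[OF assms(4)] by simp
  hence n: "(cmod (u z x - w z x))^2 \<le> (2 / \<eta>)^2" by (intro power_mono) auto
  have p: "c^2 \<le> Im (u z x) * Im (w z x)" using iu iw c_pos
    by (simp add: power2_eq_square mult_mono)
  show "Dist (u z x) (w z x) \<le> Kmax" unfolding Dist_def Kmax_def
    using n p c_pos by (intro frac_le) auto
  show "0 \<le> Dist (u z x) (w z x)" using iu iw c_pos by (intro Dist_nonneg) linarith+
qed

definition "dd u w = (SUP z\<in>Heta \<eta>. SUP x\<in>space M. Dist (u z x) (w z x))"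

lemma dd_upper:
  assumes "u \<in> Beta M s \<eta>" "w \<in> Beta M s \<eta>" "z \<in> Heta \<eta>" "x \<in> space M"
  shows "Dist (u z x) (w z x) \<le> dd u w"
  unfolding dd_def by (rule SUP2_upper[where B=Kmax]) (use Dist_bound[OF assms(1,2)] not_empty assms in auto)

lemma dd_nonneg:
  assumes "u \<in> Beta M s \<eta>" "w \<in> Beta M s \<eta>"
  shows "0 \<le> dd u w"
proof -
  obtain x where x: "x \<in> space M" using not_empty by blast
  show ?thesis using Dist_bound(2)[OF assms Heta_ne x] dd_upper[OF assms Heta_ne x] by linarith
qed

lemma contraction:
  assumes u: "u \<in> Beta M s \<eta>" and w: "w \<in> Beta M s \<eta>"
  shows "dd (Phi M a s u) (Phi M a s w) \<le> contr_factor N \<eta> * dd u w"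
  unfolding dd_def[of "Phi M a s u"]
  by (rule SUP2_least) (use Heta_ne not_empty contract_point[OF u w _ _ dd_nonneg[OF u w] dd_upper[OF u w]] in auto)

lemma q_lt1: "contr_factor N \<eta> < 1" "0 \<le> contr_factor N \<eta>"
proof -
  show "contr_factor N \<eta> < 1"
  proof (cases "N = 0")
    case False
    hence "0 < \<eta>^2 / N" using N_nonneg eta0 by simp
    hence "1 < (1 + \<eta>^2 / N)^2" by (simp add: power2_eq_square) (smt (verit) mult_less_cancel_left1)
    thus ?thesis using False unfolding contr_factor_def by (simp add: divide_less_eq)
  qed (simp add: contr_factor_def)
  show "0 \<le> contr_factor N \<eta>" by (simp add: contr_factor_def)
qed

lemma intop_cong: "(\<And>y. y \<in> space M \<Longrightarrow> f y = g y) \<Longrightarrow> intop M s f = intop M s g"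
  unfolding intop_def by (intro ext Bochner_Integration.integral_cong) auto

lemma Phi_cong: "(\<And>y. y \<in> space M \<Longrightarrow> u z y = v z y) \<Longrightarrow> Phi M a s u z = Phi M a s v z"
  unfolding Phi_def using intop_cong[of "u z" "v z"] by simp

definition "u0 = (\<lambda>(z::complex) (x::'a). \<i> * complex_of_real \<eta>)"

lemma u0_Beta: "u0 \<in> Beta M s \<eta>"
proof -
  have ce: "c \<le> \<eta>"
  proof -
    have "\<eta>^2 \<le> 1" using eta0 eta1 by (simp add: power_le_one)
    also have "1 \<le> (2 + N)^2" using N_nonneg mult_mono[of 1 "2+N" 1 "2+N"] by (simp add: power2_eq_square)
    finally have "\<eta>^2 \<le> (2 + N)^2" .
    hence "\<eta> * \<eta>^2 \<le> \<eta> * (2 + N)^2" using eta0 by simp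
    thus ?thesis unfolding c_def using N_nonneg by (simp add: divide_le_eq power3_eq_cube power2_eq_square mult.assoc)
  qed
  have n: "cmod (\<i> * complex_of_real \<eta>) = \<eta>" using eta0 by (simp add: norm_mult)
  have e1: "\<eta> \<le> 1 / \<eta>" using eta0 eta1 by (simp add: le_divide_eq power2_eq_square[symmetric] power_le_one)
  show ?thesis unfolding Beta_def
  proof (intro CollectI conjI ballI)
    fix z assume "z \<in> Heta \<eta>"
    show "u0 z \<in> bmeas M upper_half" unfolding u0_def bmeas_def upper_half_def using eta0
      by (auto simp: image_constant_conv)
    show "supnorm M (u0 z) \<le> 1 / \<eta>" unfolding supnorm_def u0_def
      by (rule cSUP_least) (use not_empty n e1 in auto)
  next
    fix z x
    show "\<eta> ^ 3 / (2 + opnorm M s)\<^sup>2 \<le> Im (u0 z x)" using ce by (simp add: u0_def c_def N_def)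
  qed
qed

definition "it n = (Phi M a s ^^ n) u0"

lemma it_Suc: "it (Suc n) = Phi M a s (it n)" by (simp add: it_def)

lemma it_Beta: "it n \<in> Beta M s \<eta>"
  by (induction n) (simp_all add: it_def u0_Beta Phi_self)

abbreviation "q \<equiv> contr_factor N \<eta>"
definition "C0 = dd (it 0) (it 1)"

lemma dd_it: "dd (it n) (it (Suc n)) \<le> q ^ n * C0"
proof (induction n)
  case 0 show ?case by (simp add: C0_def)
next
  case (Suc n)
  have "dd (it (Suc n)) (it (Suc (Suc n))) \<le> q * dd (it n) (it (Suc n))"
    using contraction[OF it_Beta[of n] it_Beta[of "Suc n"]] by (simp add: it_Suc)
  also have "\<dots> \<le> q * (q ^ n * C0)" using Suc q_lt1(2) by (rule mult_left_mono)
  finally show ?case by simp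
qed

lemma it_diff:
  assumes z: "z \<in> Heta \<eta>" and x: "x \<in> space M"
  shows "cmod (it n z x - it (Suc n) z x) \<le> (sqrt C0 / \<eta>) * sqrt q ^ n"
proof -
  note BU = Beta_D[OF it_Beta z] and BW = Beta_D[OF it_Beta z]
  define p1 where "p1 = Im (it n z x)"
  define p2 where "p2 = Im (it (Suc n) z x)"
  have p1: "0 < p1" "p1 \<le> 1/\<eta>" using BU(2)[OF x, of n] BU(3)[OF x, of n] c_pos abs_Im_le_cmod[of "it n z x"]
    unfolding p1_def by linarith+
  have p2: "0 < p2" "p2 \<le> 1/\<eta>" using BU(2)[OF x, of "Suc n"] BU(3)[OF x, of "Suc n"] c_pos abs_Im_le_cmod[of "it (Suc n) z x"]
    unfolding p2_def by linarith+
  have D: "Dist (it n z x) (it (Suc n) z x) \<le> q ^ n * C0"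
    using dd_upper[OF it_Beta[of n] it_Beta[of "Suc n"] z x] dd_it[of n] by linarith
  have "(cmod (it n z x - it (Suc n) z x))^2 = Dist (it n z x) (it (Suc n) z x) * (p1 * p2)"
    unfolding Dist_def p1_def[symmetric] p2_def[symmetric] using p1 p2 by simp
  also have "\<dots> \<le> (q ^ n * C0) * ((1/\<eta>) * (1/\<eta>))"
    using D p1 p2 Dist_bound(2)[OF it_Beta it_Beta z x] eta0 q_lt1(2) dd_nonneg[OF it_Beta it_Beta, of 0 1]
    by (intro mult_mono) (auto intro: mult_mono simp: C0_def)
  also have "\<dots> = ((sqrt C0 / \<eta>) * sqrt q ^ n)^2"
  proof -
    have e1: "(sqrt q ^ n)^2 = q ^ n" using q_lt1(2)
      by (simp add: power2_eq_square power_mult_distrib[symmetric])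
    have e2: "(sqrt C0)^2 = C0" using dd_nonneg[OF it_Beta it_Beta, of 0 1] by (simp add: C0_def)
    have "((sqrt C0 / \<eta>) * sqrt q ^ n)^2 = (sqrt C0)^2 / \<eta>^2 * (sqrt q ^ n)^2"
      by (simp add: power_mult_distrib power_divide)
    also have "\<dots> = C0 / \<eta>^2 * q ^ n" unfolding e1 e2 ..
    finally have h1: "((sqrt C0 / \<eta>) * sqrt q ^ n)^2 = C0 / \<eta>^2 * q ^ n" .
    have h2: "q ^ n * C0 * (1 / \<eta> * (1 / \<eta>)) = C0 / \<eta>^2 * q ^ n"
      by (simp add: power2_eq_square mult_ac)
    show ?thesis unfolding h1 h2 ..
  qed
  finally have fin: "(cmod (it n z x - it (Suc n) z x))^2 \<le> ((sqrt C0 / \<eta>) * sqrt q ^ n)^2" .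
  have "0 \<le> (sqrt C0 / \<eta>) * sqrt q ^ n"
    using q_lt1(2) eta0 dd_nonneg[OF it_Beta it_Beta, of 0 1] unfolding C0_def
    by (intro mult_nonneg_nonneg divide_nonneg_pos zero_le_power real_sqrt_ge_zero) auto
  with fin show ?thesis by (rule power2_le_imp_le)
qed

definition "L z x = lim (\<lambda>n. it n z x)"

lemma L_lim:
  assumes z: "z \<in> Heta \<eta>" and x: "x \<in> space M"
  shows "(\<lambda>n. it n z x) \<longlonglongrightarrow> L z x"
proof -
  have "convergent (\<lambda>n. it n z x)"
    by (rule geometric_convergent[where C="sqrt C0 / \<eta>" and r="sqrt q"])
       (use it_diff[OF z x] q_lt1 in \<open>auto simp: real_sqrt_lt_1_iff\<close>)
  thus ?thesis unfolding L_def by (simp add: convergent_LIMSEQ_iff)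
qed

lemma L_Beta: "L \<in> Beta M s \<eta>"
proof -
  have *: "c \<le> Im (L z x) \<and> norm (L z x) \<le> 1/\<eta>" if z: "z \<in> Heta \<eta>" and x: "x \<in> space M" for z x
  proof -
    note l = L_lim[OF z x]
    have "c \<le> Im (L z x)"
      by (rule LIMSEQ_le_const[OF tendsto_Im[OF l]]) (use Beta_D(2)[OF it_Beta z x] in auto)
    moreover have "norm (L z x) \<le> 1/\<eta>"
      by (rule LIMSEQ_le_const2[OF tendsto_norm[OF l]]) (use Beta_D(3)[OF it_Beta z x] in auto)
    ultimately show ?thesis by simp
  qed
  have m: "L z \<in> borel_measurable M" if z: "z \<in> Heta \<eta>" for z
    by (rule borel_measurable_LIMSEQ_metric[where f="\<lambda>n. it n z"])
       (use Beta_D(1)[OF it_Beta z] L_lim[OF z] in \<open>auto simp: bmeas_def\<close>)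
  show ?thesis unfolding Beta_def
  proof (intro CollectI conjI ballI)
    fix z assume z: "z \<in> Heta \<eta>"
    show "L z \<in> bmeas M upper_half"
      unfolding bmeas_def upper_half_def using m[OF z] * [OF z] c_pos
      by (auto simp: bounded_iff intro!: exI[of _ "1/\<eta>"]) (smt (verit))
    show "supnorm M (L z) \<le> 1 / \<eta>" unfolding supnorm_def
      by (rule cSUP_least) (use not_empty * [OF z] in auto)
  next
    fix z x assume "z \<in> Heta \<eta>" "x \<in> space M"
    with * show "\<eta> ^ 3 / (2 + opnorm M s)\<^sup>2 \<le> Im (L z x)" by (simp add: c_def N_def)
  qed
qed

lemma L_fix:
  assumes z: "z \<in> Heta \<eta>" and x: "x \<in> space M"
  shows "L z x = Phi M a s L z x"
proof -
  have I: "(\<lambda>n. intop M s (it n z) x) \<longlonglongrightarrow> intop M s (L z) x"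
    unfolding intop_def
  proof (rule integral_dominated_convergence[where w="\<lambda>_. Bs * (1/\<eta>)"])
    show "(\<lambda>y. complex_of_real (s x y) * L z y) \<in> borel_measurable M"
      using s_row_meas[OF x] Beta_D(1)[OF L_Beta z] by (auto simp: bmeas_def)
    show "(\<lambda>y. complex_of_real (s x y) * it n z y) \<in> borel_measurable M" for n
    proof -
      have [measurable]: "it n z \<in> borel_measurable M" using Beta_D(1)[OF it_Beta[of n] z] by (simp add: bmeas_def)
      have [measurable]: "(\<lambda>y. s x y) \<in> borel_measurable M" by (rule s_row_meas[OF x])
      show ?thesis by measurable
    qed
    show "integrable M (\<lambda>_. Bs * (1/\<eta>))" by simp
    show "AE y in M. (\<lambda>n. complex_of_real (s x y) * it n z y) \<longlonglongrightarrow> complex_of_real (s x y) * L z y"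
      by (rule AE_I2) (intro tendsto_mult tendsto_const L_lim[OF z])
    show "AE y in M. norm (complex_of_real (s x y) * it n z y) \<le> Bs * (1/\<eta>)" for n
    proof (rule AE_I2)
      fix y assume y: "y \<in> space M"
      have "norm (complex_of_real (s x y) * it n z y) = s x y * norm (it n z y)"
        using s_nonneg[OF x y] by (simp add: norm_mult)
      also have "\<dots> \<le> Bs * (1/\<eta>)"
        using Bs(2)[OF x y] Beta_D(3)[OF it_Beta z y] s_nonneg[OF x y] Bs(1)
        by (intro mult_mono) auto
      finally show "norm (complex_of_real (s x y) * it n z y) \<le> Bs * (1/\<eta>)" .
    qed
  qed
  have nz: "zeta L z x \<noteq> 0" using zeta_props(4)[OF L_Beta z x] eta0 by auto
  have "(\<lambda>n. - 1 / (z + complex_of_real (a x) + intop M s (it n z) x)) \<longlonglongrightarrow> - 1 / zeta L z x"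
    unfolding zeta_def by (intro tendsto_intros I) (use nz in \<open>simp add: zeta_def\<close>)
  hence "(\<lambda>n. it (Suc n) z x) \<longlonglongrightarrow> Phi M a s L z x"
    by (simp add: it_Suc Phi_def zeta_def)
  moreover have "(\<lambda>n. it (Suc n) z x) \<longlonglongrightarrow> L z x" using L_lim[OF z x] by (rule LIMSEQ_Suc)
  ultimately show ?thesis using LIMSEQ_unique by blast
qed

definition "uf = Phi M a s L"

lemma uf_Beta: "uf \<in> Beta M s \<eta>" unfolding uf_def by (rule Phi_self[OF L_Beta])

lemma uf_fix: "z \<in> Heta \<eta> \<Longrightarrow> uf z = Phi M a s uf z"
  unfolding uf_def by (rule Phi_cong) (use L_fix in \<open>simp add: uf_def\<close>)

lemma uniq:
  assumes v: "v \<in> Beta M s \<eta>" and vf: "\<And>z. z \<in> Heta \<eta> \<Longrightarrow> v z = Phi M a s v z"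
    and w: "w \<in> Beta M s \<eta>" and wf: "\<And>z. z \<in> Heta \<eta> \<Longrightarrow> w z = Phi M a s w z"
    and z: "z \<in> Heta \<eta>"
  shows "v z = w z"
proof -
  have "dd v w = dd (Phi M a s v) (Phi M a s w)"
    unfolding dd_def by (intro SUP_cong refl) (simp add: vf wf)
  also have "\<dots> \<le> q * dd v w" by (rule contraction[OF v w])
  finally have "dd v w \<le> q * dd v w" .
  hence d0: "dd v w \<le> 0" using q_lt1 dd_nonneg[OF v w] by (smt (verit) mult_le_cancel_right1)
  have eq: "v z y = w z y" if y: "y \<in> space M" for y
  proof -
    have "Dist (v z y) (w z y) = 0" using dd_upper[OF v w z y] Dist_bound(2)[OF v w z y] d0 by linarith
    moreover have "0 < Im (v z y)" "0 < Im (w z y)"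
      using Beta_D(2)[OF v z y] Beta_D(2)[OF w z y] c_pos by linarith+
    ultimately show ?thesis by (simp add: Dist_def)
  qed
  have "v z = Phi M a s v z" by (rule vf[OF z])
  also have "\<dots> = Phi M a s w z" by (rule Phi_cong) (rule eq)
  also have "\<dots> = w z" by (rule wf[OF z, symmetric])
  finally show ?thesis .
qed

end

theorem mainTheorem12:
  fixes M :: "'a measure" and a :: "'a \<Rightarrow> real" and s :: "'a \<Rightarrow> 'a \<Rightarrow> real" and \<eta> :: real
  assumes "prob_space M"
    and "a \<in> bmeas M UNIV"
    and "(\<lambda>(x, y). s x y) \<in> bmeas (M \<Otimes>\<^sub>M M) {0..}"
    and "\<And>x y. x \<in> space M \<Longrightarrow> y \<in> space M \<Longrightarrow> s x y = s y x"
    and "0 < \<eta>" and "\<eta> < 1" and "\<eta> * supnorm M a < 1"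
  shows "(\<forall>u\<in>Beta M s \<eta>. Phi M a s u \<in> Beta M s \<eta>)
    \<and> (\<forall>u\<in>Beta M s \<eta>. \<forall>w\<in>Beta M s \<eta>.
          (SUP z\<in>Heta \<eta>. SUP x\<in>space M. Dist (Phi M a s u z x) (Phi M a s w z x))
            \<le> contr_factor (opnorm M s) \<eta> *
              (SUP z\<in>Heta \<eta>. SUP x\<in>space M. Dist (u z x) (w z x)))
    \<and> (\<exists>u\<in>Beta M s \<eta>. (\<forall>z\<in>Heta \<eta>. u z = Phi M a s u z)
          \<and> (\<forall>v\<in>Beta M s \<eta>. (\<forall>z\<in>Heta \<eta>. v z = Phi M a s v z) \<longrightarrow> (\<forall>z\<in>Heta \<eta>. v z = u z)))"
proof -
  interpret S: setting M a s \<eta>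
    using assms by (simp add: setting_def setting_axioms_def)
  show ?thesis
  proof (intro conjI ballI)
    fix u assume "u \<in> Beta M s \<eta>"
    thus "Phi M a s u \<in> Beta M s \<eta>" by (rule S.Phi_self)
  next
    fix u w assume u: "u \<in> Beta M s \<eta>" and w: "w \<in> Beta M s \<eta>"
    show "(SUP z\<in>Heta \<eta>. SUP x\<in>space M. Dist (Phi M a s u z x) (Phi M a s w z x))
            \<le> contr_factor (opnorm M s) \<eta> *
              (SUP z\<in>Heta \<eta>. SUP x\<in>space M. Dist (u z x) (w z x))"
      using S.contraction[OF u w] by (simp add: S.dd_def S.N_def)
  next
    show "\<exists>u\<in>Beta M s \<eta>. (\<forall>z\<in>Heta \<eta>. u z = Phi M a s u z)
          \<and> (\<forall>v\<in>Beta M s \<eta>. (\<forall>z\<in>Heta \<eta>. v z = Phi M a s v z) \<longrightarrow> (\<forall>z\<in>Heta \<eta>. v z = u z))"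
    proof (rule bexI[of _ S.uf])
      show "S.uf \<in> Beta M s \<eta>" by (rule S.uf_Beta)
      show "(\<forall>z\<in>Heta \<eta>. S.uf z = Phi M a s S.uf z)
          \<and> (\<forall>v\<in>Beta M s \<eta>. (\<forall>z\<in>Heta \<eta>. v z = Phi M a s v z) \<longrightarrow> (\<forall>z\<in>Heta \<eta>. v z = S.uf z))"
        using S.uf_fix S.uniq[OF _ _ S.uf_Beta S.uf_fix] by blast
    qed
  qed
qed

end
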